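(* Let $\mathbb{F}$ be an algebraically closed field of characteristic $p>2$ and $(V,[\cdot,\cdot]_V,\alpha_V,B_V)$ a restricted involutive quadratic Hom-Lie algebra with $p$-structure $[p]_V$. Let $L=\mathbb{F}e^*\oplus V\oplus\mathbb{F}e$ be the double extension of $V$ by $(\mathscr{D},x_0,1,\lambda_0)$ and $\widetilde L=\mathbb{F}\widetilde e^*\oplus V\oplus\mathbb{F}\widetilde e$ the double extension by $(\widetilde{\mathscr{D}},\widetilde x_0,1,\widetilde\lambda_0)$, where $\mathscr{D},\widetilde{\mathscr{D}}\in\mathrm{Der}_{\alpha_V}(V)$ are restricted derivations with the $p$-property (data $\xi,a_0$ resp. $\widetilde\xi,\widetilde a_0$) and $B_V$ is $\mathscr{D}$- and $\widetilde{\mathscr{D}}$-invariant. Let $L$ carry the $p$-structure $u^{[p]_L}=u^{[p]_V}+\mathscr{P}(u)e$ ($u\in V$), $(e^* )^{[p]_L}=a_0+le+\xi e^*$, $e^{[p]_L}=me+u_0$, and $\widetilde L$ the $p$-structure $u^{[p]_{\widetilde L}}=u^{[p]_V}+\widetilde{\mathscr{P}}(u)\widetilde e$, $(\widetilde e^* )^{[p]_{\widetilde L}}=\widetilde a_0+\widetilde l\widetilde e+\widetilde\xi\widetilde e^*$, $\widetilde e^{[p]_{\widetilde L}}=\widetilde m\widetilde e+\widetilde u_0$, where $l,m,\widetilde l,\widetilde m\in\mathbb{F}$, $u_0,\widetilde u_0\in\mathfrak z(V)$ with $\mathscr{D}(u_0)=\widetilde{\mathscr{D}}(\widetilde u_0)=0$,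 and $\mathscr{P},\widetilde{\mathscr{P}}:V\to\mathbb{F}$ satisfy $\mathscr{P}(cu)=c^p\mathscr{P}(u)$, $\mathscr{P}(u+v)=\mathscr{P}(u)+\mathscr{P}(v)+\sum_{i=1}^{p-1}\eta_i^V(u,v)$ (and likewise $\widetilde{\mathscr{P}}$ with $\widetilde\eta_i^V$ defined using $\widetilde{\mathscr{D}}$). Let $\pi:L\to\widetilde L$ be an adapted isomorphism of the form $\pi(u)=\pi_0(u)+B_V(t_\pi,u)\widetilde e$ ($u\in V$), $\pi(e)=\gamma\widetilde e$, $\pi(e^* )=\gamma^{-1}(\widetilde e^*-\pi_0(t_\pi)-\frac12B_V(t_\pi,t_\pi)\widetilde e)$, where $\pi_0$ is an automorphism of $V$, $\gamma\in\mathbb{F}\setminus\{0\}$ and $t_\pi\in V$. Then $\pi$ is restricted (i.e. $\pi(f^{[p]_L})=\pi(f)^{[p]_{\widetilde L}}$ for all $f\in L$) if and only if $\pi_0(u^{[p]_V})=(\pi_0(u))^{[p]_V}+B_V(t_\pi,u)^p\widetilde u_0$ for all $u\in V$ and $\widetilde{\mathscr{P}}\circ\pi_0=\gamma\mathscr{P}+B_V(t_\pi,(\cdot)^{[p]_V})-B_V(t_\pi,\cdot)^p\widetilde m$, $\widetilde\xi=\gamma^{p-1}\xi$, $\widetilde l=\gamma^p\big(B_V(t_\pi,a_0)+\gamma l-\frac{\xi}{2\gamma}B_V(t_\pi,t_\pi)\big)+\widetilde{\mathscr{P}}(\pi_0(t_\pi))+\frac{1}{2^p}B_V(t_\pi,t_\pi)^p\widetilde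 m-\sum_{i=1}^{p-1}\frac1i\Phi_{i,\mathrm{II}}$, $\widetilde a_0=\gamma^p(\pi_0(a_0)-\gamma^{-1}\xi\pi_0(t_\pi))+\frac{1}{2^p}B_V(t_\pi,t_\pi)^p\widetilde u_0+\pi_0(t_\pi)^{[p]_V}-\sum_{i=1}^{p-1}\frac1i\Phi_{i,\mathrm{I}}$, $\widetilde m=\gamma^{-p}(\gamma m+B_V(t_\pi,u_0))$, $\widetilde u_0=\gamma^{-p}\pi_0(u_0)$.
   Context: Hom-Lie algebra: $(\mathfrak g,[\cdot,\cdot],\alpha)$ with $[x,y]=-[y,x]$, $[\alpha(x),[y,z]]+[\alpha(y),[z,x]]+[\alpha(z),[x,y]]=0$, $\alpha([x,y])=[\alpha x,\alpha y]$; involutive: $\alpha^2=\mathrm{id}$; quadratic: symmetric nondegenerate bilinear $B$, $B([x,y],z)=B(x,[y,z])$, $B(\alpha x,y)=B(x,\alpha y)$. $p$-structure: map $x\mapsto x^{[p]}$ with $\mathrm{ad}(x^{[p]})\alpha^{p-1}=\mathrm{ad}(\alpha^{p-1}x)\cdots\mathrm{ad}(x)$, $(kx)^{[p]}=k^px^{[p]}$, $(x+y)^{[p]}=x^{[p]}+y^{[p]}+\sum_{i=1}^{p-1}s_i(x,y)$ with $\mathrm{ad}(\alpha^{p-2}(kx+y))\cdots\mathrm{ad}(kx+y)(x)=\sum_i is_i(x,y)k^{i-1}$. $\mathrm{Der}_{\alpha_V}(V)$: linear $\mathscr{D}$ with $\mathscr{D}\alpha_V=\alpha_V\mathscr{D}$,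 $\mathscr{D}[x,y]_V=[\mathscr{D}x,\alpha_Vy]_V+[\alpha_Vx,\mathscr{D}y]_V$; restricted: $\mathscr{D}(x^{[p]_V})=\mathrm{ad}_V(\alpha_V^{p-1}x)\cdots\mathrm{ad}_V(\alpha_Vx)(\mathscr{D}x)$; $p$-property with data $\xi,a_0$: $\mathscr{D}^p=\xi\mathscr{D}\alpha_V^{p-1}+\mathrm{ad}_V(a_0)\alpha_V^{p-1}$, $\mathscr{D}(a_0)=0$. $B_V$ $\mathscr{D}$-invariant: $B_V(\mathscr{D}x,y)+B_V(x,\mathscr{D}y)=0$. $\eta_i^V(u,v)$: defined by $B_V(\mathscr{D}(\alpha_V^{p-2}(ku+v)),\mathrm{ad}_V(\alpha_V^{p-3}(ku+v))\cdots\mathrm{ad}_V(ku+v)(u))=\sum_{i=1}^{p-1}i\eta_i^V(u,v)k^{i-1}$ for all $k$. Double extension by $(\mathscr{D},x_0,1,\lambda_0)$, where $x_0\in V$ satisfies $\mathscr{D}+\mathrm{ad}_V(x_0)=\mathscr{D}$, $\alpha_V(\mathscr{D}x_0)=-\mathscr{D}x_0$, $\alpha_V\mathscr{D}^2-\mathscr{D}^2\alpha_V=\mathrm{ad}_V(\mathscr{D}x_0)$: $L=\mathbb{F}e^*\oplus V\oplus\mathbb{F}e$ with skew bracket $[x,y]=[x,y]_V+B_V(\mathscr{D}x,y)e$, $[e^*,x]=-[x,e^*]=\mathscr{D}x$, $[e^*,e^*]=0$, $e$ central; $\alpha(x)=\alpha_V(x)+B_V(x_0,x)e$, $\alpha(e^*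 )=e^*+x_0+\lambda_0e$, $\alpha(e)=e$; $B|_V=B_V$, $B(V,e)=B(V,e^* )=0$, $B(e^*,e)=1$, $B(e^*,e^* )=B(e,e)=0$ (likewise $\widetilde L$ with twist $\widetilde\alpha$). Adapted isomorphism: linear bijection $\pi:L\to\widetilde L$ preserving brackets and forms, $\pi\alpha=\widetilde\alpha\pi$, $\pi(\mathbb{F}e\oplus V)=\mathbb{F}\widetilde e\oplus V$. Automorphism $\pi_0$ of $V$: linear bijection preserving $[\cdot,\cdot]_V$, $B_V$ and commuting with $\alpha_V$. $\Phi_{i,\mathrm I}\in V$, $\Phi_{i,\mathrm{II}}\in\mathbb{F}$: define $\Phi_i\in\widetilde L$ ($1\le i\le p-1$) by $\mathrm{ad}(\widetilde\alpha^{p-2}(k\widetilde e^*-\pi_0(t_\pi)))\circ\cdots\circ\mathrm{ad}(k\widetilde e^*-\pi_0(t_\pi))(\widetilde e^* )=\sum_{i=1}^{p-1}\Phi_ik^{i-1}$ for all $k\in\mathbb{F}$ (brackets in $\widetilde L$), and let $\Phi_{i,\mathrm I}$ and $\Phi_{i,\mathrm{II}}$ be the $V$-component and the $\widetilde e$-coefficient of $\Phi_i$ in $\widetilde L=\mathbb{F}\widetilde e^*\oplus V\oplus\mathbb{F}\widetilde e$. *)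

theory Defs
  imports "HOL-Computational_Algebra.Polynomial" "HOL-Library.Product_Plus"
begin

definition lin :: "('f \<Rightarrow> 'a \<Rightarrow> 'a) \<Rightarrow> ('f \<Rightarrow> 'b \<Rightarrow> 'b) \<Rightarrow> ('a::ab_group_add \<Rightarrow> 'b::ab_group_add) \<Rightarrow> bool" where
  "lin s1 s2 f \<longleftrightarrow> (\<forall>x y. f (x + y) = f x + f y) \<and> (\<forall>c x. f (s1 c x) = s2 c (f x))"

primrec iter_ad :: "('a \<Rightarrow> 'a \<Rightarrow> 'a) \<Rightarrow> ('a \<Rightarrow> 'a) \<Rightarrow> nat \<Rightarrow> 'a \<Rightarrow> 'a \<Rightarrow> 'a" where
  "iter_ad br al 0 z x = x"
| "iter_ad br al (Suc n) z x = br ((al ^^ n) z) (iter_ad br al n z x)"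

definition hom_lie :: "('f::field \<Rightarrow> 'a \<Rightarrow> 'a) \<Rightarrow> ('a::ab_group_add \<Rightarrow> 'a \<Rightarrow> 'a) \<Rightarrow> ('a \<Rightarrow> 'a) \<Rightarrow> bool" where
  "hom_lie sc br al \<longleftrightarrow> vector_space sc \<and> (\<forall>x. lin sc sc (br x)) \<and> (\<forall>y. lin sc sc (\<lambda>x. br x y))
     \<and> lin sc sc al \<and> (\<forall>x y. br x y = - br y x)
     \<and> (\<forall>x y z. br (al x) (br y z) + br (al y) (br z x) + br (al z) (br x y) = 0)
     \<and> (\<forall>x y. al (br x y) = br (al x) (al y))"

definition quadratic_form :: "('f::field \<Rightarrow> 'a \<Rightarrow> 'a) \<Rightarrow> ('a::ab_group_add \<Rightarrow> 'a \<Rightarrow> 'a) \<Rightarrow> ('a \<Rightarrow> 'a) \<Rightarrow> ('a \<Rightarrow> 'a \<Rightarrow> 'f) \<Rightarrow> bool" where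
  "quadratic_form sc br al B \<longleftrightarrow> (\<forall>x. lin sc (*) (B x)) \<and> (\<forall>x y. B x y = B y x)
     \<and> (\<forall>x. (\<forall>y. B x y = 0) \<longrightarrow> x = 0)
     \<and> (\<forall>x y z. B (br x y) z = B x (br y z)) \<and> (\<forall>x y. B (al x) y = B x (al y))"

definition p_structure :: "nat \<Rightarrow> ('f::field \<Rightarrow> 'a \<Rightarrow> 'a) \<Rightarrow> ('a::ab_group_add \<Rightarrow> 'a \<Rightarrow> 'a) \<Rightarrow> ('a \<Rightarrow> 'a) \<Rightarrow> ('a \<Rightarrow> 'a) \<Rightarrow> bool" where
  "p_structure p sc br al pm \<longleftrightarrow>
     (\<forall>x y. br (pm x) ((al ^^ (p - 1)) y) = iter_ad br al p x y)
   \<and> (\<forall>k x. pm (sc k x) = sc (k ^ p) (pm x))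
   \<and> (\<forall>x y. \<exists>s :: nat \<Rightarrow> 'a.
         (\<forall>k. iter_ad br al (p - 1) (sc k x + y) x = (\<Sum>i = 1..p - 1. sc (of_nat i * k ^ (i - 1)) (s i)))
       \<and> pm (x + y) = pm x + pm y + (\<Sum>i = 1..p - 1. s i))"

definition restricted_inv_quad_hom_lie ::
  "nat \<Rightarrow> ('f::field \<Rightarrow> 'a \<Rightarrow> 'a) \<Rightarrow> ('a::ab_group_add \<Rightarrow> 'a \<Rightarrow> 'a) \<Rightarrow> ('a \<Rightarrow> 'a) \<Rightarrow> ('a \<Rightarrow> 'a \<Rightarrow> 'f) \<Rightarrow> ('a \<Rightarrow> 'a) \<Rightarrow> bool" where
  "restricted_inv_quad_hom_lie p sc br al B pm \<longleftrightarrow> hom_lie sc br al \<and> (\<forall>x. al (al x) = x)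
     \<and> quadratic_form sc br al B \<and> p_structure p sc br al pm"

definition hom_der :: "('f::field \<Rightarrow> 'a \<Rightarrow> 'a) \<Rightarrow> ('a::ab_group_add \<Rightarrow> 'a \<Rightarrow> 'a) \<Rightarrow> ('a \<Rightarrow> 'a) \<Rightarrow> ('a \<Rightarrow> 'a) \<Rightarrow> bool" where
  "hom_der sc br al D \<longleftrightarrow> lin sc sc D \<and> (\<forall>x. D (al x) = al (D x))
     \<and> (\<forall>x y. D (br x y) = br (D x) (al y) + br (al x) (D y))"

definition restricted_der :: "nat \<Rightarrow> ('a \<Rightarrow> 'a \<Rightarrow> 'a) \<Rightarrow> ('a \<Rightarrow> 'a) \<Rightarrow> ('a \<Rightarrow> 'a) \<Rightarrow> ('a \<Rightarrow> 'a) \<Rightarrow> bool" where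
  "restricted_der p br al pm D \<longleftrightarrow> (\<forall>x. D (pm x) = iter_ad br al (p - 1) (al x) (D x))"

definition p_property :: "nat \<Rightarrow> ('f \<Rightarrow> 'a \<Rightarrow> 'a) \<Rightarrow> ('a::ab_group_add \<Rightarrow> 'a \<Rightarrow> 'a) \<Rightarrow> ('a \<Rightarrow> 'a) \<Rightarrow> ('a \<Rightarrow> 'a) \<Rightarrow> 'f \<Rightarrow> 'a \<Rightarrow> bool" where
  "p_property p sc br al D xi a0 \<longleftrightarrow>
     (\<forall>x. (D ^^ p) x = sc xi (D ((al ^^ (p - 1)) x)) + br a0 ((al ^^ (p - 1)) x)) \<and> D a0 = 0"

definition form_invariant :: "('a \<Rightarrow> 'a \<Rightarrow> 'f::ab_group_add) \<Rightarrow> ('a \<Rightarrow> 'a) \<Rightarrow> bool" where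
  "form_invariant B D \<longleftrightarrow> (\<forall>x y. B (D x) y + B x (D y) = 0)"

definition dext_data :: "('a::ab_group_add \<Rightarrow> 'a \<Rightarrow> 'a) \<Rightarrow> ('a \<Rightarrow> 'a) \<Rightarrow> ('a \<Rightarrow> 'a) \<Rightarrow> 'a \<Rightarrow> bool" where
  "dext_data br al D x0 \<longleftrightarrow> (\<forall>y. D y + br x0 y = D y) \<and> al (D x0) = - D x0
     \<and> (\<forall>y. al (D (D y)) - D (D (al y)) = br (D x0) y)"

text \<open>Elements of L = F e* + V + F e are triples (coefficient of e*, V-part, coefficient of e).\<close>
definition dsc :: "('f::field \<Rightarrow> 'v \<Rightarrow> 'v) \<Rightarrow> 'f \<Rightarrow> 'f \<times> 'v \<times> 'f \<Rightarrow> 'f \<times> 'v \<times> 'f" where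
  "dsc sc c = (\<lambda>(a, x, b). (c * a, sc c x, c * b))"

definition dbr :: "('f::field \<Rightarrow> 'v \<Rightarrow> 'v) \<Rightarrow> ('v::ab_group_add \<Rightarrow> 'v \<Rightarrow> 'v) \<Rightarrow> ('v \<Rightarrow> 'v \<Rightarrow> 'f) \<Rightarrow> ('v \<Rightarrow> 'v)
    \<Rightarrow> 'f \<times> 'v \<times> 'f \<Rightarrow> 'f \<times> 'v \<times> 'f \<Rightarrow> 'f \<times> 'v \<times> 'f" where
  "dbr sc br B D = (\<lambda>(a, x, b) (a', y, b'). (0, br x y + sc a (D y) - sc a' (D x), B (D x) y))"

definition dal :: "('f::field \<Rightarrow> 'v \<Rightarrow> 'v) \<Rightarrow> ('v::ab_group_add \<Rightarrow> 'v) \<Rightarrow> ('v \<Rightarrow> 'v \<Rightarrow> 'f) \<Rightarrow> 'v \<Rightarrow> 'f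
    \<Rightarrow> 'f \<times> 'v \<times> 'f \<Rightarrow> 'f \<times> 'v \<times> 'f" where
  "dal sc al B x0 lam0 = (\<lambda>(a, x, b). (a, al x + sc a x0, B x0 x + a * lam0 + b))"

definition dB :: "('v \<Rightarrow> 'v \<Rightarrow> 'f::field) \<Rightarrow> 'f \<times> 'v \<times> 'f \<Rightarrow> 'f \<times> 'v \<times> 'f \<Rightarrow> 'f" where
  "dB B = (\<lambda>(a, x, b) (a', y, b'). B x y + a * b' + a' * b)"

definition V_automorphism :: "('f::field \<Rightarrow> 'v \<Rightarrow> 'v) \<Rightarrow> ('v::ab_group_add \<Rightarrow> 'v \<Rightarrow> 'v) \<Rightarrow> ('v \<Rightarrow> 'v) \<Rightarrow> ('v \<Rightarrow> 'v \<Rightarrow> 'f) \<Rightarrow> ('v \<Rightarrow> 'v) \<Rightarrow> bool" where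
  "V_automorphism sc br al B f \<longleftrightarrow> lin sc sc f \<and> bij f \<and> (\<forall>x y. f (br x y) = br (f x) (f y))
     \<and> (\<forall>x y. B (f x) (f y) = B x y) \<and> (\<forall>x. f (al x) = al (f x))"

definition adapted_iso :: "('f::field \<Rightarrow> 'v::ab_group_add \<Rightarrow> 'v) \<Rightarrow>
    ('f \<times> 'v \<times> 'f \<Rightarrow> 'f \<times> 'v \<times> 'f \<Rightarrow> 'f \<times> 'v \<times> 'f) \<Rightarrow> ('f \<times> 'v \<times> 'f \<Rightarrow> 'f \<times> 'v \<times> 'f) \<Rightarrow> ('f \<times> 'v \<times> 'f \<Rightarrow> 'f \<times> 'v \<times> 'f \<Rightarrow> 'f) \<Rightarrow>
    ('f \<times> 'v \<times> 'f \<Rightarrow> 'f \<times> 'v \<times> 'f \<Rightarrow> 'f \<times> 'v \<times> 'f) \<Rightarrow> ('f \<times> 'v \<times> 'f \<Rightarrow> 'f \<times> 'v \<times> 'f) \<Rightarrow> ('f \<times> 'v \<times> 'f \<Rightarrow> 'f \<times> 'v \<times> 'f \<Rightarrow> 'f) \<Rightarrow>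
    ('f \<times> 'v \<times> 'f \<Rightarrow> 'f \<times> 'v \<times> 'f) \<Rightarrow> bool" where
  "adapted_iso sc brL alL BL brT alT BT f \<longleftrightarrow> lin (dsc sc) (dsc sc) f \<and> bij f
     \<and> (\<forall>x y. f (brL x y) = brT (f x) (f y)) \<and> (\<forall>x y. BT (f x) (f y) = BL x y)
     \<and> (\<forall>x. f (alL x) = alT (f x))
     \<and> f ` {(a, v, b). a = 0} = {(a, v, b). a = 0}"

end

theory Submission
  imports Defs "HOL-Computational_Algebra.Computational_Algebra"
begin


lemma alg_closed_infinite: "infinite (UNIV :: 'f::alg_closed_field set)"
proof
  assume fin: "finite (UNIV :: 'f set)"
  define q :: "'f poly" where "q = (\<Prod>a\<in>UNIV. [:-a, 1:]) + 1"
  have dq: "degree (\<Prod>a\<in>(UNIV::'f set). [:-a, 1:]) = card (UNIV::'f set)"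
    by (subst degree_prod_eq_sum_degree) auto
  have "card (UNIV::'f set) > 0" using fin by (simp add: card_gt_0_iff)
  hence "degree q > 0" using dq by (simp add: q_def degree_add_eq_left)
  then obtain x where "poly q x = 0" using alg_closed_imp_poly_has_root by blast
  moreover have "poly (\<Prod>a\<in>(UNIV::'f set). [:-a, 1:]) x = 0"
    by (simp add: poly_prod fin)
  ultimately show False unfolding q_def by simp
qed

lemma scalar_poly_zero:
  fixes f :: "nat \<Rightarrow> 'f::field"
  assumes inf: "infinite (UNIV :: 'f set)" and h: "\<forall>k. (\<Sum>i<n. f i * k ^ i) = 0" and i: "i < n"
  shows "f i = 0"
proof -
  define q where "q = (\<Sum>j<n. monom (f j) j)"
  have pq: "poly q k = 0" for k using h by (simp add: q_def poly_sum poly_monom)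
  have "q = 0"
  proof (rule ccontr)
    assume "q \<noteq> 0"
    hence "finite {x. poly q x = 0}" by (rule poly_roots_finite)
    with pq inf show False by simp
  qed
  moreover have "coeff q i = f i" using i by (simp add: q_def coeff_sum)
  ultimately show ?thesis by simp
qed

lemma vs_times: "vector_space ((*) :: 'f::field \<Rightarrow> 'f \<Rightarrow> 'f)"
  by unfold_locales (auto simp: algebra_simps)

lemma vec_poly_zero:
  fixes sc :: "'f::field \<Rightarrow> 'v::ab_group_add \<Rightarrow> 'v"
  assumes vs: "vector_space sc" and inf: "infinite (UNIV :: 'f set)"
    and h: "\<forall>k. (\<Sum>i<n. sc (k ^ i) (c i)) = 0" and i: "i < n"
  shows "c i = 0"
proof (rule ccontr)
  assume nz: "c i \<noteq> 0"
  interpret vp: vector_space_pair sc "(*) :: 'f \<Rightarrow> 'f \<Rightarrow> 'f"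
    using vs vs_times by (simp add: vector_space_pair_def)
  have "vp.vs1.independent {c i}"
    using nz vp.vs1.independent_insertI[of "c i" "{}"] by simp
  then obtain g where g: "Vector_Spaces.linear sc (*) g" "g (c i) = 1"
    using vp.linear_independent_extend[of "{c i}" "\<lambda>_. 1"] by auto
  have "\<forall>k. (\<Sum>j<n. g (c j) * k ^ j) = 0"
  proof
    fix k
    have "g (\<Sum>j<n. sc (k ^ j) (c j)) = (\<Sum>j<n. k ^ j * g (c j))"
      using g(1) by (simp add: vp.linear_sum vp.linear_scale)
    thus "(\<Sum>j<n. g (c j) * k ^ j) = 0" using h g(1)
      by (simp add: vp.linear_0 mult.commute)
  qed
  from scalar_poly_zero[OF inf this i] g(2) show False by simp
qed



lemma lin_0: "lin s1 s2 f \<Longrightarrow> f 0 = 0"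
  unfolding lin_def by (metis add_cancel_right_right add_0)

lemma lin_sum: assumes "lin s1 s2 f" shows "f (sum g A) = (\<Sum>a\<in>A. f (g a))"
proof (cases "finite A")
  case True thus ?thesis
    by (induction A rule: finite_induct) (use assms lin_0 in \<open>auto simp: lin_def\<close>)
qed (simp add: lin_0[OF assms])

lemma lin_add: "lin s1 s2 f \<Longrightarrow> f (x + y) = f x + f y" unfolding lin_def by blast
lemma lin_scale: "lin s1 s2 f \<Longrightarrow> f (s1 c x) = s2 c (f x)" unfolding lin_def by blast

lemma coeff_unique:
  fixes S :: "'f::field \<Rightarrow> 'a::ab_group_add \<Rightarrow> 'a"
  assumes vs: "vector_space S" and inf: "infinite (UNIV :: 'f set)" and ch: "CHAR('f) = p"
    and h: "\<forall>k. (\<Sum>i = 1..p - 1. S (of_nat i * k ^ (i - 1)) (v i)) = (\<Sum>i = 1..p - 1. S (of_nat i * k ^ (i - 1)) (w i))"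
    and i: "i \<in> {1..p - 1}"
  shows "v i = w i"
proof -
  interpret vector_space S by (rule vs)
  define c where "c j = S (of_nat (Suc j)) (v (Suc j) - w (Suc j))" for j
  have "\<forall>k. (\<Sum>j<p - 1. S (k ^ j) (c j)) = 0"
  proof
    fix k
    have "(\<Sum>j<p - 1. S (k ^ j) (c j)) = (\<Sum>i = 1..p - 1. S (of_nat i * k ^ (i - 1)) (v i - w i))"
      by (simp add: sum.atLeast1_atMost_eq c_def scale_scale mult.commute)
    also have "\<dots> = 0" using h[rule_format, of k]
      by (simp add: scale_right_diff_distrib sum_subtractf)
    finally show "(\<Sum>j<p - 1. S (k ^ j) (c j)) = 0" .
  qed
  from vec_poly_zero[OF vs inf this, of "i - 1"] i
  have "c (i - 1) = 0" by auto
  moreover have "Suc (i - 1) = i" using i by auto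
  ultimately have "S (of_nat i) (v i - w i) = 0" unfolding c_def by metis
  moreover have "(of_nat i :: 'f) \<noteq> 0"
    using i ch by (auto simp: of_nat_eq_0_iff_char_dvd dest: dvd_imp_le)
  ultimately show ?thesis by simp
qed

lemma pstruct_add:
  fixes S :: "'f::field \<Rightarrow> 'a::ab_group_add \<Rightarrow> 'a"
  assumes ps: "p_structure p S br al pm" and vs: "vector_space S" and inf: "infinite (UNIV :: 'f set)"
    and ch: "CHAR('f) = p"
    and h: "\<forall>k. iter_ad br al (p - 1) (S k x + y) x = (\<Sum>i = 1..p - 1. S (k ^ (i - 1)) (\<Phi> i))"
  shows "pm (x + y) = pm x + pm y + (\<Sum>i = 1..p - 1. S (inverse (of_nat i)) (\<Phi> i))"
proof -
  interpret vector_space S by (rule vs)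
  obtain s where s: "\<forall>k. iter_ad br al (p - 1) (S k x + y) x = (\<Sum>i = 1..p - 1. S (of_nat i * k ^ (i - 1)) (s i))"
    "pm (x + y) = pm x + pm y + (\<Sum>i = 1..p - 1. s i)"
    using ps unfolding p_structure_def by blast
  have nz: "(of_nat i :: 'f) \<noteq> 0" if "i \<in> {1..p - 1}" for i
    using that ch by (auto simp: of_nat_eq_0_iff_char_dvd dest: dvd_imp_le)
  have "\<forall>k. (\<Sum>i = 1..p - 1. S (of_nat i * k ^ (i - 1)) (s i))
      = (\<Sum>i = 1..p - 1. S (of_nat i * k ^ (i - 1)) (S (inverse (of_nat i)) (\<Phi> i)))"
  proof
    fix k
    have "(\<Sum>i = 1..p - 1. S (of_nat i * k ^ (i - 1)) (S (inverse (of_nat i)) (\<Phi> i)))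
        = (\<Sum>i = 1..p - 1. S (k ^ (i - 1)) (\<Phi> i))"
      by (rule sum.cong) (use nz in \<open>auto simp: scale_scale\<close>)
    thus "(\<Sum>i = 1..p - 1. S (of_nat i * k ^ (i - 1)) (s i))
      = (\<Sum>i = 1..p - 1. S (of_nat i * k ^ (i - 1)) (S (inverse (of_nat i)) (\<Phi> i)))"
      using s(1) h by simp
  qed
  from coeff_unique[OF vs inf ch this]
  have "(\<Sum>i = 1..p - 1. s i) = (\<Sum>i = 1..p - 1. S (inverse (of_nat i)) (\<Phi> i))"
    by (intro sum.cong) auto
  with s(2) show ?thesis by simp
qed

lemma pstruct_add0:
  fixes S :: "'f::field \<Rightarrow> 'a::ab_group_add \<Rightarrow> 'a"
  assumes ps: "p_structure p S br al pm" and vs: "vector_space S" and inf: "infinite (UNIV :: 'f set)"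
    and ch: "CHAR('f) = p"
    and h: "\<forall>k. iter_ad br al (p - 1) (S k x + y) x = 0"
  shows "pm (x + y) = pm x + pm y"
proof -
  interpret vector_space S by (rule vs)
  have "\<forall>k. iter_ad br al (p - 1) (S k x + y) x = (\<Sum>i = 1..p - 1. S (k ^ (i - 1)) ((\<lambda>_. 0) i))"
    using h by simp
  from pstruct_add[OF ps vs inf ch this] show ?thesis by simp
qed

lemma pow_comm: assumes "\<forall>x. f (a x) = b (f x)" shows "f ((a ^^ n) x) = (b ^^ n) (f x)"
  by (induction n) (use assms in auto)

lemma iter_ad_hom:
  assumes "\<forall>x y. f (br1 x y) = br2 (f x) (f y)" "\<forall>x. f (al1 x) = al2 (f x)"
  shows "f (iter_ad br1 al1 n z w) = iter_ad br2 al2 n (f z) (f w)"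
  by (induction n) (use assms pow_comm[of f al1 al2] in auto)

lemma pstruct_hom_add:
  fixes S :: "'f::field \<Rightarrow> 'a::ab_group_add \<Rightarrow> 'a" and T :: "'f \<Rightarrow> 'b::ab_group_add \<Rightarrow> 'b"
  assumes ps1: "p_structure p S br1 al1 pm1" and ps2: "p_structure p T br2 al2 pm2"
    and vs1: "vector_space S" and vs2: "vector_space T"
    and inf: "infinite (UNIV :: 'f set)" and ch: "CHAR('f) = p"
    and f: "lin S T f" "\<forall>x y. f (br1 x y) = br2 (f x) (f y)" "\<forall>x. f (al1 x) = al2 (f x)"
    and x: "f (pm1 x) = pm2 (f x)" and y: "f (pm1 y) = pm2 (f y)"
  shows "f (pm1 (x + y)) = pm2 (f (x + y))"
proof -
  obtain s where s: "\<forall>k. iter_ad br1 al1 (p - 1) (S k x + y) x = (\<Sum>i = 1..p - 1. S (of_nat i * k ^ (i - 1)) (s i))"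
    "pm1 (x + y) = pm1 x + pm1 y + (\<Sum>i = 1..p - 1. s i)"
    using ps1 unfolding p_structure_def by blast
  obtain s' where s': "\<forall>k. iter_ad br2 al2 (p - 1) (T k (f x) + f y) (f x) = (\<Sum>i = 1..p - 1. T (of_nat i * k ^ (i - 1)) (s' i))"
    "pm2 (f x + f y) = pm2 (f x) + pm2 (f y) + (\<Sum>i = 1..p - 1. s' i)"
    using ps2 unfolding p_structure_def by blast
  have "\<forall>k. (\<Sum>i = 1..p - 1. T (of_nat i * k ^ (i - 1)) (f (s i))) = (\<Sum>i = 1..p - 1. T (of_nat i * k ^ (i - 1)) (s' i))"
  proof
    fix k
    have "f (iter_ad br1 al1 (p - 1) (S k x + y) x) = iter_ad br2 al2 (p - 1) (f (S k x + y)) (f x)"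
      by (rule iter_ad_hom[OF f(2,3)])
    also have "f (S k x + y) = T k (f x) + f y" by (simp add: lin_add[OF f(1)] lin_scale[OF f(1)])
    finally have "f (\<Sum>i = 1..p - 1. S (of_nat i * k ^ (i - 1)) (s i)) = (\<Sum>i = 1..p - 1. T (of_nat i * k ^ (i - 1)) (s' i))"
      using s(1) s'(1) by simp
    thus "(\<Sum>i = 1..p - 1. T (of_nat i * k ^ (i - 1)) (f (s i))) = (\<Sum>i = 1..p - 1. T (of_nat i * k ^ (i - 1)) (s' i))"
      by (simp add: lin_sum[OF f(1)] lin_scale[OF f(1)])
  qed
  from coeff_unique[OF vs2 inf ch this]
  have "(\<Sum>i = 1..p - 1. f (s i)) = (\<Sum>i = 1..p - 1. s' i)" by (intro sum.cong) auto
  thus ?thesis using s(2) s'(2) x y by (simp add: lin_add[OF f(1)] lin_sum[OF f(1)])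
qed

lemma pstruct_hom_scale:
  assumes ps1: "p_structure p S br1 al1 pm1" and ps2: "p_structure p T br2 al2 pm2"
    and f: "lin S T f" and x: "f (pm1 x) = pm2 (f x)"
  shows "f (pm1 (S c x)) = pm2 (f (S c x))"
proof -
  have "pm1 (S c x) = S (c ^ p) (pm1 x)" using ps1 unfolding p_structure_def by blast
  hence "f (pm1 (S c x)) = T (c ^ p) (f (pm1 x))" by (simp add: lin_scale[OF f])
  also have "\<dots> = pm2 (T c (f x))" using ps2 x unfolding p_structure_def by simp
  finally show ?thesis by (simp add: lin_scale[OF f])
qed



lemma dsc_eq[simp]: "dsc sc c (a, u, b) = (c * a, sc c u, c * b)" by (simp add: dsc_def)
lemma dsc_gen: "dsc sc c z = (c * fst z, sc c (fst (snd z)), c * snd (snd z))"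
  by (cases z) (simp add: dsc_def)
lemma dbr_eq[simp]: "dbr sc br B D (a, u, b) (a', v, b') = (0, br u v + sc a (D v) - sc a' (D u), B (D u) v)"
  by (simp add: dbr_def)
lemma dal_eq[simp]: "dal sc al B x0 lam0 (a, u, b) = (a, al u + sc a x0, B x0 u + a * lam0 + b)"
  by (simp add: dal_def)

lemma vs_dsc: assumes "vector_space sc" shows "vector_space (dsc sc)"
proof -
  interpret vector_space sc by (rule assms)
  show ?thesis
    by unfold_locales (auto simp: dsc_gen algebra_simps scale_right_distrib scale_left_distrib prod_eq_iff)
qed

definition P0 :: "'f \<times> 'v \<times> 'f \<Rightarrow> 'f \<times> 'v \<times> ('f::zero)" where "P0 z = (fst z, fst (snd z), 0)"

lemma dbr_P0: "dbr sc br B D z y = dbr sc br B D (P0 z) y"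
  by (cases z; cases y) (simp add: P0_def)
lemma dal_P0: "P0 (dal sc al B x0 lam0 z) = P0 (dal sc al B x0 lam0 (P0 z))"
  by (cases z) (simp add: P0_def)
lemma dal_pow_P0: "P0 ((dal sc al B x0 lam0 ^^ n) z) = P0 ((dal sc al B x0 lam0 ^^ n) (P0 z))"
proof (induction n)
  case 0 thus ?case by (simp add: P0_def)
next
  case (Suc n)
  have "P0 ((dal sc al B x0 lam0 ^^ Suc n) z) = P0 (dal sc al B x0 lam0 (P0 ((dal sc al B x0 lam0 ^^ n) z)))"
    using dal_P0 by simp
  also have "\<dots> = P0 ((dal sc al B x0 lam0 ^^ Suc n) (P0 z))" using Suc dal_P0 by (metis funpow.simps(2) comp_apply)
  finally show ?case .
qed
lemma iter_ad_P0: "iter_ad (dbr sc br B D) (dal sc al B x0 lam0) n z w = iter_ad (dbr sc br B D) (dal sc al B x0 lam0) n (P0 z) w"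
proof (induction n)
  case (Suc n)
  show ?case using Suc dbr_P0[where z="(dal sc al B x0 lam0 ^^ n) z"] dbr_P0[where z="(dal sc al B x0 lam0 ^^ n) (P0 z)"]
    dal_pow_P0[where n=n and z=z] by (metis iter_ad.simps(2))
qed simp

lemma iter_ad_fst: "fst (iter_ad (dbr sc br B D) al (Suc n) z w) = 0"
  by (cases "(al ^^ n) z"; cases "iter_ad (dbr sc br B D) al n z w") simp

lemma iter_ad_zero: assumes "br z w = 0" "\<forall>x. br x 0 = 0" shows "iter_ad br al (Suc n) z w = 0"
  by (induction n) (use assms in auto)

lemma sc_solve: assumes "vector_space sc" "c \<noteq> 0" shows "(x = sc c y) = (y = sc (inverse c) x)"
proof -
  interpret vector_space sc by fact
  show ?thesis using assms(2) by (auto simp: scale_scale)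
qed

lemma ps_hom: "p_structure p S br al pm \<Longrightarrow> pm (S k x) = S (k ^ p) (pm x)"
  unfolding p_structure_def by blast

lemma skew_zero: fixes br :: "'v::ab_group_add \<Rightarrow> 'v \<Rightarrow> 'v" assumes "\<And>x y. br x y = - br y x" shows "br v v + br v v = 0"
proof -
  have "br v v = - br v v" by (rule assms)
  hence "br v v + br v v = - br v v + br v v" by (rule arg_cong[where f="\<lambda>z. z + br v v"])
  thus ?thesis by simp
qed

lemma inv_solve: fixes c :: "'f::field" shows "c \<noteq> 0 \<Longrightarrow> (a = inverse c * b) = (b = c * a)"
  by (metis divide_inverse_commute mult.commute nonzero_eq_divide_eq)

lemma fld3a: fixes xi g B0 :: "'f::field"
  assumes "g \<noteq> 0" "(2::'f) \<noteq> 0"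
  shows "xi * (inverse g * (- B0 / 2)) = - (xi / (2 * g) * B0)"
  using assms by (simp add: field_simps)
lemma fld3: fixes xi g h B0 Ba l PPt mt s3 K G :: "'f::field"
  assumes "g \<noteq> 0" "(2::'f) \<noteq> 0" "h = - B0 / 2" "h ^ p = - K"
  shows "G * (xi * (inverse g * h) + Ba + l * g) - (- PPt + h ^ p * mt) - s3
       = G * (Ba + g * l - xi / (2 * g) * B0) + PPt + K * mt - s3"
proof -
  have "xi * (inverse g * h) = - (xi / (2 * g) * B0)" unfolding assms(3) by (rule fld3a[OF assms(1,2)])
  thus ?thesis using assms(4) by (simp add: algebra_simps)
qed
lemma grp_solve: "(a + u + s = (z::'a::ab_group_add)) = (a = z - u - s)"
  unfolding eq_diff_eq by (simp add: ac_simps)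
lemma grp2: "(z::'a::ab_group_add) - (- P + - Q) - s = z + Q + P - s"
  by (simp add: algebra_simps)



theorem theorem4p13:
  fixes p :: nat
    and sc :: "'f::alg_closed_field \<Rightarrow> 'v::ab_group_add \<Rightarrow> 'v"
    and br :: "'v \<Rightarrow> 'v \<Rightarrow> 'v" and al :: "'v \<Rightarrow> 'v" and B :: "'v \<Rightarrow> 'v \<Rightarrow> 'f" and pV :: "'v \<Rightarrow> 'v"
    and D Dt :: "'v \<Rightarrow> 'v" and xi xit :: 'f and a0 a0t :: 'v
    and x0 x0t :: 'v and lam0 lam0t :: 'f
    and pL pLt :: "'f \<times> 'v \<times> 'f \<Rightarrow> 'f \<times> 'v \<times> 'f"
    and l m lt mt :: 'f and u0 u0t :: 'v
    and PP PPt :: "'v \<Rightarrow> 'f" and eta etat :: "nat \<Rightarrow> 'v \<Rightarrow> 'v \<Rightarrow> 'f"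
    and \<pi> :: "'f \<times> 'v \<times> 'f \<Rightarrow> 'f \<times> 'v \<times> 'f" and \<pi>0 :: "'v \<Rightarrow> 'v"
    and \<gamma> :: 'f and t :: 'v
    and \<Phi> :: "nat \<Rightarrow> 'f \<times> 'v \<times> 'f"
  assumes char: "CHAR('f) = p" and p2: "p > 2"
    and V: "restricted_inv_quad_hom_lie p sc br al B pV"
    and D: "hom_der sc br al D" "restricted_der p br al pV D" "p_property p sc br al D xi a0"
    and Dt: "hom_der sc br al Dt" "restricted_der p br al pV Dt" "p_property p sc br al Dt xit a0t"
    and invD: "form_invariant B D" and invDt: "form_invariant B Dt"
    and x0: "dext_data br al D x0" and x0t: "dext_data br al Dt x0t"
    and eta: "\<forall>u v k. B (D ((al ^^ (p - 2)) (sc k u + v))) (iter_ad br al (p - 2) (sc k u + v) u)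
                = (\<Sum>i = 1..p - 1. of_nat i * eta i u v * k ^ (i - 1))"
    and etat: "\<forall>u v k. B (Dt ((al ^^ (p - 2)) (sc k u + v))) (iter_ad br al (p - 2) (sc k u + v) u)
                = (\<Sum>i = 1..p - 1. of_nat i * etat i u v * k ^ (i - 1))"
    and PP: "\<forall>c u. PP (sc c u) = c ^ p * PP u"
            "\<forall>u v. PP (u + v) = PP u + PP v + (\<Sum>i = 1..p - 1. eta i u v)"
    and PPt: "\<forall>c u. PPt (sc c u) = c ^ p * PPt u"
            "\<forall>u v. PPt (u + v) = PPt u + PPt v + (\<Sum>i = 1..p - 1. etat i u v)"
    and u0: "\<forall>v. br u0 v = 0" "D u0 = 0"
    and u0t: "\<forall>v. br u0t v = 0" "Dt u0t = 0"
    and pL: "p_structure p (dsc sc) (dbr sc br B D) (dal sc al B x0 lam0) pL"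
            "\<forall>u. pL (0, u, 0) = (0, pV u, PP u)"
            "pL (1, 0, 0) = (xi, a0, l)"
            "pL (0, 0, 1) = (0, u0, m)"
    and pLt: "p_structure p (dsc sc) (dbr sc br B Dt) (dal sc al B x0t lam0t) pLt"
            "\<forall>u. pLt (0, u, 0) = (0, pV u, PPt u)"
            "pLt (1, 0, 0) = (xit, a0t, lt)"
            "pLt (0, 0, 1) = (0, u0t, mt)"
    and \<pi>0: "V_automorphism sc br al B \<pi>0"
    and \<gamma>: "\<gamma> \<noteq> 0"
    and \<pi>: "adapted_iso sc (dbr sc br B D) (dal sc al B x0 lam0) (dB B)
                          (dbr sc br B Dt) (dal sc al B x0t lam0t) (dB B) \<pi>"
    and \<pi>_V: "\<forall>u. \<pi> (0, u, 0) = (0, \<pi>0 u, B t u)"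
    and \<pi>_e: "\<pi> (0, 0, 1) = (0, 0, \<gamma>)"
    and \<pi>_estar: "\<pi> (1, 0, 0) = dsc sc (inverse \<gamma>) (1, - \<pi>0 t, - B t t / 2)"
    and \<Phi>: "\<forall>k. iter_ad (dbr sc br B Dt) (dal sc al B x0t lam0t) (p - 1) (k, - \<pi>0 t, 0) (1, 0, 0)
                = (\<Sum>i = 1..p - 1. dsc sc (k ^ (i - 1)) (\<Phi> i))"
  shows "(\<forall>f. \<pi> (pL f) = pLt (\<pi> f)) \<longleftrightarrow>
     ((\<forall>u. \<pi>0 (pV u) = pV (\<pi>0 u) + sc ((B t u) ^ p) u0t)
    \<and> (\<forall>u. PPt (\<pi>0 u) = \<gamma> * PP u + B t (pV u) - (B t u) ^ p * mt)
    \<and> xit = \<gamma> ^ (p - 1) * xi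
    \<and> lt = \<gamma> ^ p * (B t a0 + \<gamma> * l - xi / (2 * \<gamma>) * B t t) + PPt (\<pi>0 t)
           + inverse (2 ^ p) * (B t t) ^ p * mt
           - (\<Sum>i = 1..p - 1. inverse (of_nat i) * snd (snd (\<Phi> i)))
    \<and> a0t = sc (\<gamma> ^ p) (\<pi>0 a0 - sc (inverse \<gamma> * xi) (\<pi>0 t)) + sc (inverse (2 ^ p) * (B t t) ^ p) u0t
           + pV (\<pi>0 t) - (\<Sum>i = 1..p - 1. sc (inverse (of_nat i)) (fst (snd (\<Phi> i))))
    \<and> mt = inverse (\<gamma> ^ p) * (\<gamma> * m + B t u0)
    \<and> u0t = sc (inverse (\<gamma> ^ p)) (\<pi>0 u0))"
proof -
  have Hl: "hom_lie sc br al" and Qf: "quadratic_form sc br al B" and pV: "p_structure p sc br al pV"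
    using V unfolding restricted_inv_quad_hom_lie_def by auto
  have vs: "vector_space sc" using Hl unfolding hom_lie_def by blast
  have linbr': "\<forall>x. lin sc sc (br x)" using Hl unfolding hom_lie_def by blast
  have linbr2': "\<forall>y. lin sc sc (\<lambda>x. br x y)" using Hl unfolding hom_lie_def by blast
  have skew': "\<forall>x y. br x y = - br y x" using Hl unfolding hom_lie_def by blast
  have linB': "\<forall>x. lin sc (*) (B x)" using Qf unfolding quadratic_form_def by blast
  have symB': "\<forall>x y. B x y = B y x" using Qf unfolding quadratic_form_def by blast
  note linbr = linbr'[rule_format] and linbr2 = linbr2'[rule_format] and skew = skew'[rule_format]
    and linB = linB'[rule_format] and symB = symB'[rule_format]
  interpret V: vector_space sc by (rule vs)
  have vsL: "vector_space (dsc sc)" by (rule vs_dsc[OF vs])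
  have inf: "infinite (UNIV :: 'f set)" by (rule alg_closed_infinite)
  have prp: "prime p" using char p2 prime_CHAR_semidom[where 'a='f] by simp
  have oddp: "odd p" using prp p2 prime_odd_nat by blast
  have two: "(2::'f) \<noteq> 0"
  proof
    assume "(2::'f) = 0"
    hence "of_nat 2 = (0::'f)" by simp
    hence "p dvd 2" using char by (simp only: of_nat_eq_0_iff_char_dvd)
    thus False using p2 by (auto dest: dvd_imp_le)
  qed
  have linDt: "lin sc sc Dt" using Dt(1) unfolding hom_der_def by blast
  have brvv: "br v v = 0" for v
  proof -
    have "br v v + br v v = 0" using skew by (rule skew_zero)
    moreover have "sc (1 + 1) (br v v) = sc 1 (br v v) + sc 1 (br v v)" by (rule V.scale_left_distrib)
    ultimately have "sc (1 + 1) (br v v) = 0" by simp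
    moreover have "(1 + 1 :: 'f) \<noteq> 0" using two by simp
    ultimately show ?thesis by simp
  qed
  have BDvv: "B (Dt v) v = 0" for v
  proof -
    have "B (Dt v) v + B v (Dt v) = 0" using invDt unfolding form_invariant_def by blast
    hence "B (Dt v) v + B (Dt v) v = 0" by (simp only: symB[of v "Dt v"])
    hence "2 * B (Dt v) v = 0" by (simp only: mult_2)
    thus ?thesis using two by (simp only: mult_eq_0_iff) blast
  qed
  have Bsc1: "B (sc c x) y = c * B x y" for c x y
  proof -
    have "B (sc c x) y = B y (sc c x)" by (rule symB)
    also have "\<dots> = c * B y x" by (rule lin_scale[OF linB])
    also have "B y x = B x y" by (rule symB)
    finally show ?thesis .
  qed
  have psT: "p_structure p (dsc sc) (dbr sc br B Dt) (dal sc al B x0t lam0t) pLt" by (rule pLt(1))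
  have psL: "p_structure p (dsc sc) (dbr sc br B D) (dal sc al B x0 lam0) pL" by (rule pL(1))
  note homT = ps_hom[OF psT]
  have brT0: "dbr sc br B Dt x 0 = 0" for x
    by (cases x) (simp add: zero_prod_def lin_0[OF linbr] lin_0[OF linDt] lin_0[OF linB])
  have p1: "p - 1 = Suc (p - 2)" using p2 by simp
  have splitT: "pLt (0, v, b) = pLt (0, v, 0) + pLt (0, 0, b)" for v b
  proof -
    have "\<forall>k. iter_ad (dbr sc br B Dt) (dal sc al B x0t lam0t) (p - 1) (dsc sc k (0, v, 0) + (0, 0, b)) (0, v, 0) = 0"
    proof
      fix k
      have "dbr sc br B Dt (dsc sc k (0, v, 0) + (0, 0, b)) (0, v, 0) = 0"
        using lin_scale[OF linbr2, of k v v] lin_scale[OF linDt, of k v]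
        by (simp add: brvv BDvv zero_prod_def Bsc1)
      thus "iter_ad (dbr sc br B Dt) (dal sc al B x0t lam0t) (p - 1) (dsc sc k (0, v, 0) + (0, 0, b)) (0, v, 0) = 0"
        unfolding p1 by (rule iter_ad_zero) (use brT0 in blast)
    qed
    from pstruct_add0[OF psT vsL inf char this] show ?thesis by simp
  qed
  have eT: "pLt (0, 0, b) = (0, sc (b ^ p) u0t, b ^ p * mt)" for b
    using homT[of b "(0,0,1)"] pLt(4) by simp
  have vT: "pLt (0, v, 0) = (0, pV v, PPt v)" for v using pLt(2) by simp
  have pVneg: "pV (- v) = - pV v" for v
  proof -
    have "pV (sc (-1) v) = sc ((-1) ^ p) (pV v)" by (rule ps_hom[OF pV])
    thus ?thesis using oddp by simp
  qed
  have PPtneg: "PPt (- v) = - PPt v" for v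
    using PPt(1)[rule_format, of "-1" v] oddp by simp
  have linpi: "lin (dsc sc) (dsc sc) \<pi>" and hompi: "\<forall>x y. \<pi> (dbr sc br B D x y) = dbr sc br B Dt (\<pi> x) (\<pi> y)"
    and alpi: "\<forall>x. \<pi> (dal sc al B x0 lam0 x) = dal sc al B x0t lam0t (\<pi> x)"
    using \<pi> unfolding adapted_iso_def by blast+
  have pif: "\<pi> (a, u, b) = dsc sc a (\<pi> (1, 0, 0)) + (0, \<pi>0 u, B t u) + (0, 0, b * \<gamma>)" for a u b
  proof -
    have "(a, u, b) = dsc sc a (1, 0, 0) + (0, u, 0) + dsc sc b (0, 0, 1)" by simp
    hence "\<pi> (a, u, b) = \<pi> (dsc sc a (1, 0, 0)) + \<pi> (0, u, 0) + \<pi> (dsc sc b (0, 0, 1))"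
      by (simp only: lin_add[OF linpi])
    hence "\<pi> (a, u, b) = dsc sc a (\<pi> (1, 0, 0)) + \<pi> (0, u, 0) + dsc sc b (\<pi> (0, 0, 1))"
      by (simp only: lin_scale[OF linpi])
    thus ?thesis using \<pi>_V \<pi>_e by simp
  qed
  have gp: "\<gamma> ^ p \<noteq> 0" using \<gamma> by simp
  have pie0: "\<pi> (0, u, b) = (0, \<pi>0 u, B t u + b * \<gamma>)" for u b
    using pif[of 0 u b] by (simp add: dsc_gen)
  have GEe: "(\<pi> (pL (0, 0, 1)) = pLt (\<pi> (0, 0, 1))) \<longleftrightarrow>
      (mt = inverse (\<gamma> ^ p) * (\<gamma> * m + B t u0) \<and> u0t = sc (inverse (\<gamma> ^ p)) (\<pi>0 u0))"
  proof -
    have l: "\<pi> (pL (0, 0, 1)) = (0, \<pi>0 u0, B t u0 + m * \<gamma>)" using pL(4) pie0 by simp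
    have r: "pLt (\<pi> (0, 0, 1)) = (0, sc (\<gamma> ^ p) u0t, \<gamma> ^ p * mt)" using \<pi>_e eT by simp
    have c1: "(\<pi>0 u0 = sc (\<gamma> ^ p) u0t) \<longleftrightarrow> (u0t = sc (inverse (\<gamma> ^ p)) (\<pi>0 u0))"
      by (rule sc_solve[OF vs gp])
    have c2: "(B t u0 + m * \<gamma> = \<gamma> ^ p * mt) \<longleftrightarrow> (mt = inverse (\<gamma> ^ p) * (\<gamma> * m + B t u0))"
      using gp by (auto simp: field_simps)
    show ?thesis unfolding l r using c1 c2 by auto
  qed
  have GV: "(\<pi> (pL (0, u, 0)) = pLt (\<pi> (0, u, 0))) \<longleftrightarrow>
      (\<pi>0 (pV u) = pV (\<pi>0 u) + sc ((B t u) ^ p) u0t \<and> PPt (\<pi>0 u) = \<gamma> * PP u + B t (pV u) - (B t u) ^ p * mt)" for u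
  proof -
    have l: "\<pi> (pL (0, u, 0)) = (0, \<pi>0 (pV u), B t (pV u) + PP u * \<gamma>)" using pL(2) pie0 by simp
    have r: "pLt (\<pi> (0, u, 0)) = (0, pV (\<pi>0 u) + sc ((B t u) ^ p) u0t, PPt (\<pi>0 u) + (B t u) ^ p * mt)"
      using \<pi>_V splitT[of "\<pi>0 u" "B t u"] vT eT by simp
    have c2: "(B t (pV u) + PP u * \<gamma> = PPt (\<pi>0 u) + (B t u) ^ p * mt) \<longleftrightarrow> (PPt (\<pi>0 u) = \<gamma> * PP u + B t (pV u) - (B t u) ^ p * mt)"
      by (auto simp: algebra_simps)
    show ?thesis unfolding l r using c2 by auto
  qed
  define h where "h = - B t t / 2"
  define \<sigma>2 where "\<sigma>2 = (\<Sum>i = 1..p - 1. sc (inverse (of_nat i)) (fst (snd (\<Phi> i))))"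
  define \<sigma>3 where "\<sigma>3 = (\<Sum>i = 1..p - 1. inverse (of_nat i) * snd (snd (\<Phi> i)))"
  have hp: "h ^ p = - (inverse (2 ^ p) * (B t t) ^ p)"
    using oddp by (simp add: h_def power_divide field_simps)
  have fPhi: "fst (\<Phi> i) = 0" if i: "i \<in> {1..p - 1}" for i
  proof -
    have "\<forall>k. (\<Sum>j<p - 1. fst (\<Phi> (Suc j)) * k ^ j) = 0"
    proof
      fix k
      have "fst (iter_ad (dbr sc br B Dt) (dal sc al B x0t lam0t) (p - 1) (k, - \<pi>0 t, 0) (1, 0, 0)) = 0"
        unfolding p1 by (rule iter_ad_fst)
      hence "fst (\<Sum>i = 1..p - 1. dsc sc (k ^ (i - 1)) (\<Phi> i)) = 0" using \<Phi> by simp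
      thus "(\<Sum>j<p - 1. fst (\<Phi> (Suc j)) * k ^ j) = 0"
        by (simp add: fst_sum dsc_gen sum.atLeast1_atMost_eq mult.commute)
    qed
    from scalar_poly_zero[OF inf this, of "i - 1"] i
    have "fst (\<Phi> (Suc (i - 1))) = 0" by auto
    moreover have "Suc (i - 1) = i" using i by auto
    ultimately show ?thesis by simp
  qed
  have sumPhi: "(\<Sum>i = 1..p - 1. dsc sc (inverse (of_nat i)) (\<Phi> i)) = (0, \<sigma>2, \<sigma>3)"
  proof -
    have "(\<Sum>i = 1..p - 1. inverse (of_nat i) * fst (\<Phi> i)) = 0"
      by (rule sum.neutral) (simp add: fPhi)
    thus ?thesis unfolding \<sigma>2_def \<sigma>3_def
      by (simp add: prod_eq_iff fst_sum snd_sum dsc_gen)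
  qed
  have piE: "\<pi> (1, 0, 0) = (inverse \<gamma>, - sc (inverse \<gamma>) (\<pi>0 t), inverse \<gamma> * h)"
    using \<pi>_estar by (simp add: h_def)
  have GEs: "(\<pi> (pL (1, 0, 0)) = pLt (\<pi> (1, 0, 0))) \<longleftrightarrow>
     (xit = \<gamma> ^ (p - 1) * xi
    \<and> lt = \<gamma> ^ p * (B t a0 + \<gamma> * l - xi / (2 * \<gamma>) * B t t) + PPt (\<pi>0 t)
           + inverse (2 ^ p) * (B t t) ^ p * mt
           - (\<Sum>i = 1..p - 1. inverse (of_nat i) * snd (snd (\<Phi> i)))
    \<and> a0t = sc (\<gamma> ^ p) (\<pi>0 a0 - sc (inverse \<gamma> * xi) (\<pi>0 t)) + sc (inverse (2 ^ p) * (B t t) ^ p) u0t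
           + pV (\<pi>0 t) - (\<Sum>i = 1..p - 1. sc (inverse (of_nat i)) (fst (snd (\<Phi> i)))))"
  proof -
    have l: "\<pi> (pL (1, 0, 0)) = (xi * inverse \<gamma>, \<pi>0 a0 - sc (inverse \<gamma> * xi) (\<pi>0 t), xi * (inverse \<gamma> * h) + B t a0 + l * \<gamma>)"
      using pL(3) pif[of xi a0 l] piE by (simp add: V.scale_scale mult.commute)
    have X: "pLt (1, - \<pi>0 t, h) = (xit, a0t, lt) + pLt (0, - \<pi>0 t, h) + (0, \<sigma>2, \<sigma>3)"
    proof -
      have "\<forall>k. iter_ad (dbr sc br B Dt) (dal sc al B x0t lam0t) (p - 1) (dsc sc k (1, 0, 0) + (0, - \<pi>0 t, h)) (1, 0, 0)
          = (\<Sum>i = 1..p - 1. dsc sc (k ^ (i - 1)) (\<Phi> i))"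
      proof
        fix k
        have "iter_ad (dbr sc br B Dt) (dal sc al B x0t lam0t) (p - 1) (dsc sc k (1, 0, 0) + (0, - \<pi>0 t, h)) (1, 0, 0)
           = iter_ad (dbr sc br B Dt) (dal sc al B x0t lam0t) (p - 1) (P0 (dsc sc k (1, 0, 0) + (0, - \<pi>0 t, h))) (1, 0, 0)"
          by (rule iter_ad_P0)
        also have "P0 (dsc sc k (1, 0, 0) + (0, - \<pi>0 t, h)) = (k, - \<pi>0 t, 0)" by (simp add: P0_def)
        finally show "iter_ad (dbr sc br B Dt) (dal sc al B x0t lam0t) (p - 1) (dsc sc k (1, 0, 0) + (0, - \<pi>0 t, h)) (1, 0, 0)
          = (\<Sum>i = 1..p - 1. dsc sc (k ^ (i - 1)) (\<Phi> i))" using \<Phi> by simp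
      qed
      from pstruct_add[OF psT vsL inf char this] show ?thesis using pLt(3) sumPhi by simp
    qed
    have r: "pLt (\<pi> (1, 0, 0)) = (inverse (\<gamma> ^ p) * xit,
        sc (inverse (\<gamma> ^ p)) (a0t + (- pV (\<pi>0 t) + sc (h ^ p) u0t) + \<sigma>2),
        inverse (\<gamma> ^ p) * (lt + (- PPt (\<pi>0 t) + h ^ p * mt) + \<sigma>3))"
    proof -
      have pe: "\<pi> (1, 0, 0) = dsc sc (inverse \<gamma>) (1, - \<pi>0 t, h)" using \<pi>_estar by (simp only: h_def)
      have "pLt (\<pi> (1, 0, 0)) = dsc sc (inverse \<gamma> ^ p) (pLt (1, - \<pi>0 t, h))" unfolding pe by (rule homT)
      also have "pLt (1, - \<pi>0 t, h) = (xit, a0t + (- pV (\<pi>0 t) + sc (h ^ p) u0t) + \<sigma>2, lt + (- PPt (\<pi>0 t) + h ^ p * mt) + \<sigma>3)"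
      proof -
        have "pLt (0, - \<pi>0 t, h) = (0, - pV (\<pi>0 t) + sc (h ^ p) u0t, - PPt (\<pi>0 t) + h ^ p * mt)"
          unfolding splitT[of "- \<pi>0 t" h] vT eT pVneg PPtneg by simp
        thus ?thesis unfolding X by simp
      qed
      finally show ?thesis unfolding dsc_eq power_inverse by simp
    qed
    obtain q where q: "p = Suc q" using p2 by (cases p) auto
    have c1: "(xi * inverse \<gamma> = inverse (\<gamma> ^ p) * xit) \<longleftrightarrow> (xit = \<gamma> ^ (p - 1) * xi)"
    proof -
      have "(xi * inverse \<gamma> = inverse (\<gamma> ^ p) * xit) \<longleftrightarrow> (xit = \<gamma> ^ p * (xi * inverse \<gamma>))"
        by (rule inv_solve[OF gp])
      also have "\<gamma> ^ p * (xi * inverse \<gamma>) = \<gamma> ^ (p - 1) * xi"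
        unfolding q using \<gamma> by simp
      finally show ?thesis .
    qed
    have c2: "(\<pi>0 a0 - sc (inverse \<gamma> * xi) (\<pi>0 t) = sc (inverse (\<gamma> ^ p)) (a0t + (- pV (\<pi>0 t) + sc (h ^ p) u0t) + \<sigma>2))
        \<longleftrightarrow> (a0t = sc (\<gamma> ^ p) (\<pi>0 a0 - sc (inverse \<gamma> * xi) (\<pi>0 t)) + sc (inverse (2 ^ p) * (B t t) ^ p) u0t
           + pV (\<pi>0 t) - \<sigma>2)"
    proof -
      have igp: "inverse (\<gamma> ^ p) \<noteq> 0" using gp by simp
      have hsc: "sc (h ^ p) u0t = - sc (inverse (2 ^ p) * (B t t) ^ p) u0t" unfolding hp by (rule V.scale_minus_left)
      have "(\<pi>0 a0 - sc (inverse \<gamma> * xi) (\<pi>0 t) = sc (inverse (\<gamma> ^ p)) (a0t + (- pV (\<pi>0 t) + - sc (inverse (2 ^ p) * (B t t) ^ p) u0t) + \<sigma>2))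
         \<longleftrightarrow> (a0t + (- pV (\<pi>0 t) + - sc (inverse (2 ^ p) * (B t t) ^ p) u0t) + \<sigma>2 = sc (\<gamma> ^ p) (\<pi>0 a0 - sc (inverse \<gamma> * xi) (\<pi>0 t)))"
        using sc_solve[OF vs igp] unfolding inverse_inverse_eq by blast
      also have "\<dots> \<longleftrightarrow> (a0t = sc (\<gamma> ^ p) (\<pi>0 a0 - sc (inverse \<gamma> * xi) (\<pi>0 t)) - (- pV (\<pi>0 t) + - sc (inverse (2 ^ p) * (B t t) ^ p) u0t) - \<sigma>2)"
        by (rule grp_solve)
      also have "sc (\<gamma> ^ p) (\<pi>0 a0 - sc (inverse \<gamma> * xi) (\<pi>0 t)) - (- pV (\<pi>0 t) + - sc (inverse (2 ^ p) * (B t t) ^ p) u0t) - \<sigma>2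
         = sc (\<gamma> ^ p) (\<pi>0 a0 - sc (inverse \<gamma> * xi) (\<pi>0 t)) + sc (inverse (2 ^ p) * (B t t) ^ p) u0t + pV (\<pi>0 t) - \<sigma>2"
        by (rule grp2)
      finally show ?thesis unfolding hsc .
    qed
    have c3: "(xi * (inverse \<gamma> * h) + B t a0 + l * \<gamma> = inverse (\<gamma> ^ p) * (lt + (- PPt (\<pi>0 t) + h ^ p * mt) + \<sigma>3))
       \<longleftrightarrow> (lt = \<gamma> ^ p * (B t a0 + \<gamma> * l - xi / (2 * \<gamma>) * B t t) + PPt (\<pi>0 t)
           + inverse (2 ^ p) * (B t t) ^ p * mt - \<sigma>3)"
    proof -
      have "(xi * (inverse \<gamma> * h) + B t a0 + l * \<gamma> = inverse (\<gamma> ^ p) * (lt + (- PPt (\<pi>0 t) + h ^ p * mt) + \<sigma>3))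
        \<longleftrightarrow> (lt + (- PPt (\<pi>0 t) + h ^ p * mt) + \<sigma>3 = \<gamma> ^ p * (xi * (inverse \<gamma> * h) + B t a0 + l * \<gamma>))"
        by (rule inv_solve[OF gp])
      also have "\<dots> \<longleftrightarrow> (lt = \<gamma> ^ p * (xi * (inverse \<gamma> * h) + B t a0 + l * \<gamma>) - (- PPt (\<pi>0 t) + h ^ p * mt) - \<sigma>3)"
        by (rule grp_solve)
      also have "\<gamma> ^ p * (xi * (inverse \<gamma> * h) + B t a0 + l * \<gamma>) - (- PPt (\<pi>0 t) + h ^ p * mt) - \<sigma>3
          = \<gamma> ^ p * (B t a0 + \<gamma> * l - xi / (2 * \<gamma>) * B t t) + PPt (\<pi>0 t) + inverse (2 ^ p) * (B t t) ^ p * mt - \<sigma>3"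
        by (rule fld3[OF \<gamma> two h_def hp])
      finally show ?thesis .
    qed
    show ?thesis unfolding l r using c1 c2 c3 unfolding \<sigma>2_def \<sigma>3_def by auto
  qed
  show ?thesis
  proof
    assume all: "\<forall>f. \<pi> (pL f) = pLt (\<pi> f)"
    have A: "\<pi> (pL (1, 0, 0)) = pLt (\<pi> (1, 0, 0))" using all by blast
    have E: "\<pi> (pL (0, 0, 1)) = pLt (\<pi> (0, 0, 1))" using all by blast
    have U: "\<And>u. \<pi> (pL (0, u, 0)) = pLt (\<pi> (0, u, 0))" using all by blast
    show "(\<forall>u. \<pi>0 (pV u) = pV (\<pi>0 u) + sc ((B t u) ^ p) u0t)
    \<and> (\<forall>u. PPt (\<pi>0 u) = \<gamma> * PP u + B t (pV u) - (B t u) ^ p * mt)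
    \<and> xit = \<gamma> ^ (p - 1) * xi
    \<and> lt = \<gamma> ^ p * (B t a0 + \<gamma> * l - xi / (2 * \<gamma>) * B t t) + PPt (\<pi>0 t)
           + inverse (2 ^ p) * (B t t) ^ p * mt
           - (\<Sum>i = 1..p - 1. inverse (of_nat i) * snd (snd (\<Phi> i)))
    \<and> a0t = sc (\<gamma> ^ p) (\<pi>0 a0 - sc (inverse \<gamma> * xi) (\<pi>0 t)) + sc (inverse (2 ^ p) * (B t t) ^ p) u0t
           + pV (\<pi>0 t) - (\<Sum>i = 1..p - 1. sc (inverse (of_nat i)) (fst (snd (\<Phi> i))))
    \<and> mt = inverse (\<gamma> ^ p) * (\<gamma> * m + B t u0)
    \<and> u0t = sc (inverse (\<gamma> ^ p)) (\<pi>0 u0)"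
      using GEs[THEN iffD1, OF A] GEe[THEN iffD1, OF E] GV[THEN iffD1, OF U] by blast
  next
    assume C: "(\<forall>u. \<pi>0 (pV u) = pV (\<pi>0 u) + sc ((B t u) ^ p) u0t)
    \<and> (\<forall>u. PPt (\<pi>0 u) = \<gamma> * PP u + B t (pV u) - (B t u) ^ p * mt)
    \<and> xit = \<gamma> ^ (p - 1) * xi
    \<and> lt = \<gamma> ^ p * (B t a0 + \<gamma> * l - xi / (2 * \<gamma>) * B t t) + PPt (\<pi>0 t)
           + inverse (2 ^ p) * (B t t) ^ p * mt
           - (\<Sum>i = 1..p - 1. inverse (of_nat i) * snd (snd (\<Phi> i)))
    \<and> a0t = sc (\<gamma> ^ p) (\<pi>0 a0 - sc (inverse \<gamma> * xi) (\<pi>0 t)) + sc (inverse (2 ^ p) * (B t t) ^ p) u0t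
           + pV (\<pi>0 t) - (\<Sum>i = 1..p - 1. sc (inverse (of_nat i)) (fst (snd (\<Phi> i))))
    \<and> mt = inverse (\<gamma> ^ p) * (\<gamma> * m + B t u0)
    \<and> u0t = sc (inverse (\<gamma> ^ p)) (\<pi>0 u0)"
    have A: "\<pi> (pL (1, 0, 0)) = pLt (\<pi> (1, 0, 0))" using GEs C by blast
    have E: "\<pi> (pL (0, 0, 1)) = pLt (\<pi> (0, 0, 1))" using GEe C by blast
    have U: "\<pi> (pL (0, u, 0)) = pLt (\<pi> (0, u, 0))" for u using GV C by blast
    note hadd = pstruct_hom_add[OF psL psT vsL vsL inf char linpi hompi alpi]
    note hsc = pstruct_hom_scale[OF psL psT linpi]
    show "\<forall>f. \<pi> (pL f) = pLt (\<pi> f)"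
    proof
      fix f :: "'f \<times> 'v \<times> 'f"
      obtain a u b where f: "f = (a, u, b)" by (cases f)
      have fe: "f = dsc sc a (1, 0, 0) + (0, u, 0) + dsc sc b (0, 0, 1)" unfolding f by simp
      have "\<pi> (pL (dsc sc a (1, 0, 0) + (0, u, 0) + dsc sc b (0, 0, 1))) = pLt (\<pi> (dsc sc a (1, 0, 0) + (0, u, 0) + dsc sc b (0, 0, 1)))"
        by (intro hadd hsc A E U)
      thus "\<pi> (pL f) = pLt (\<pi> f)" unfolding fe .
    qed
  qed
qed


end
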